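(* Let $M\subset\mathbf{R}^{n+1}$ be a smooth closed connected mean convex hypersurface and let $u$ be the arrival time of the mean curvature flow starting from $M$. Suppose $k\ge 1$, $p\in\mathcal{S}_k\setminus\mathcal{S}_{k-1}$, and $u$ is $C^2$ at $p$. If $q_j$ is a sequence of regular points (points with $\nabla u(q_j)\neq 0$) converging to $p$, then $$\Pi_{\text{axis}}(\mathbf{n}(q_j))\to 0.$$
   Context: Mean convex means the mean curvature is non-negative. The arrival time $u$ is defined on the compact domain bounded by $M$: $u(x)$ is the time at which the front passes through $x$; equivalently $u$ is the Lipschitz viscosity solution of $-1=|\nabla u|\,\mathrm{div}(\nabla u/|\nabla u|)$ with $u=0$ on $M$, and it is smooth where $\nabla u\ne 0$. The singular set is $\mathcal{S}=\{\nabla u=0\}$; at each singular point the tangent flow is a cylinder $\mathbf{S}^{n-j}\times\mathbf{R}^j$, $0\le j\le n-1$. $\mathcal{S}_k$ is the set of singular points whose tangent flow splits off a Euclidean factor of dimension at most $k$, so $\mathcal{S}_k\setminus\mathcal{S}_{k-1}$ consists of singular points with blowup $\mathbf{R}^k\times\mathbf{S}^{n-k}$. It is known that $u$ is twice differentiable everywhere and at such $p$, $\mathrm{Hess}_u(p)=-\frac{1}{n-k}\Pi$, where $\Pi$ is orthogonal projection onto the orthogonal complement of the $\mathbf{R}^k$ factor (the axis); $\Pi_{\text{axis}}$ denotes orthogonal projection onto the $k$-plane of the axis (the kernel of $\mathrm{Hess}_u(p)$). At a regular point $q$, $\mathbf{n}(q)=\nabla u(q)/|\nabla u(q)|$ is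 the unit normal to the level set of $u$ through $q$. *)

theory Defs
  imports "HOL-Analysis.Analysis"
begin

definition grad :: "('a::euclidean_space \<Rightarrow> real) \<Rightarrow> 'a \<Rightarrow> 'a" where
  "grad u x = (\<Sum>b\<in>Basis. frechet_derivative u (at x) b *\<^sub>R b)"

definition hess :: "('a::euclidean_space \<Rightarrow> real) \<Rightarrow> 'a \<Rightarrow> 'a \<Rightarrow> 'a" where
  "hess u x = frechet_derivative (grad u) (at x)"

definition divg :: "('a::euclidean_space \<Rightarrow> 'a) \<Rightarrow> 'a \<Rightarrow> real" where
  "divg F x = (\<Sum>b\<in>Basis. frechet_derivative F (at x) b \<bullet> b)"

definition orth_proj :: "'a::euclidean_space set \<Rightarrow> 'a \<Rightarrow> 'a" where
  "orth_proj A v = (THE a. a \<in> A \<and> (\<forall>b\<in>A. (v - a) \<bullet> b = 0))"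

end

theory Submission
  imports Defs
begin


lemma orth_proj_formula:
  fixes A B :: "'a::euclidean_space set"
  assumes sub: "subspace A" and BA: "B \<subseteq> A" and orth: "pairwise orthogonal B"
    and n1: "\<And>x. x \<in> B \<Longrightarrow> norm x = 1" and ind: "independent B" and sp: "span B = A"
  shows "orth_proj A v = (\<Sum>e\<in>B. (v \<bullet> e) *\<^sub>R e)"
proof -
  have fin: "finite B" using ind independent_imp_finite by blast
  define c where "c = (\<Sum>e\<in>B. (v \<bullet> e) *\<^sub>R e)"
  have "c \<in> span B" unfolding c_def by (intro span_sum span_scale span_base) auto
  then have cA: "c \<in> A" using sp by simp
  have ee: "e \<bullet> e = 1" if "e \<in> B" for e
    using n1[OF that] by (metis norm_eq_1)
  have oe: "(v - c) \<bullet> e = 0" if e: "e \<in> B" for e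
  proof -
    have "c \<bullet> e = (\<Sum>e'\<in>B. (v \<bullet> e') * (e' \<bullet> e))"
      unfolding c_def by (simp add: inner_sum_left)
    also have "\<dots> = (\<Sum>e'\<in>B. if e' = e then v \<bullet> e else 0)"
      apply (rule sum.cong[OF refl])
      using orth e ee unfolding pairwise_def orthogonal_def by auto
    also have "\<dots> = v \<bullet> e" using fin e by simp
    finally show ?thesis by (simp add: inner_diff_left)
  qed
  have oA: "\<forall>b\<in>A. (v - c) \<bullet> b = 0"
  proof
    fix b assume "b \<in> A"
    then have "b \<in> span B" using sp by simp
    then have "orthogonal (v - c) b"
      by (rule orthogonal_to_span) (use oe orthogonal_def in auto)
    then show "(v - c) \<bullet> b = 0" by (simp add: orthogonal_def)
  qed
  have "(THE a. a \<in> A \<and> (\<forall>b\<in>A. (v - a) \<bullet> b = 0)) = c"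
  proof (rule the_equality)
    show "c \<in> A \<and> (\<forall>b\<in>A. (v - c) \<bullet> b = 0)" using cA oA by blast
  next
    fix a assume a: "a \<in> A \<and> (\<forall>b\<in>A. (v - a) \<bullet> b = 0)"
    have d: "c - a \<in> A" using a cA sub by (simp add: subspace_diff)
    have "(v - a) \<bullet> (c - a) = 0" "(v - c) \<bullet> (c - a) = 0" using a oA d by auto
    then have "(c - a) \<bullet> (c - a) = 0" by (simp add: inner_diff_left inner_diff_right)
    then show "a = c" by simp
  qed
  then show ?thesis unfolding orth_proj_def c_def by simp
qed

lemma orth_proj_props:
  fixes A :: "'a::euclidean_space set"
  assumes sub: "subspace A"
  shows "orth_proj A v \<in> A" "\<And>b. b \<in> A \<Longrightarrow> (v - orth_proj A v) \<bullet> b = 0"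
    "(\<Sum>b\<in>Basis. orth_proj A b \<bullet> b) = real (dim A)"
proof -
  obtain B where BA: "B \<subseteq> A" and orth: "pairwise orthogonal B"
    and n1: "\<And>x. x \<in> B \<Longrightarrow> norm x = 1" and ind: "independent B" and cd: "card B = dim A"
    and sp: "span B = A"
    using orthonormal_basis_subspace[OF sub] by metis
  note F = orth_proj_formula[OF sub BA orth n1 ind sp]
  have fin: "finite B" using ind independent_imp_finite by blast
  have "(\<Sum>e\<in>B. (v \<bullet> e) *\<^sub>R e) \<in> span B" by (intro span_sum span_scale span_base) auto
  then show "orth_proj A v \<in> A" using F[of v] sp by simp
  {
    fix b assume b: "b \<in> A"
    have ee: "e \<bullet> e = 1" if "e \<in> B" for e
      using n1[OF that] by (metis norm_eq_1)
    have oe: "(v - orth_proj A v) \<bullet> e = 0" if e: "e \<in> B" for e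
    proof -
      have "orth_proj A v \<bullet> e = (\<Sum>e'\<in>B. (v \<bullet> e') * (e' \<bullet> e))"
        by (simp add: F inner_sum_left)
      also have "\<dots> = (\<Sum>e'\<in>B. if e' = e then v \<bullet> e else 0)"
        apply (rule sum.cong[OF refl])
        using orth e ee unfolding pairwise_def orthogonal_def by auto
      also have "\<dots> = v \<bullet> e" using fin e by simp
      finally show ?thesis by (simp add: inner_diff_left)
    qed
    have "b \<in> span B" using sp b by simp
    then have "orthogonal (v - orth_proj A v) b"
      by (rule orthogonal_to_span) (use oe orthogonal_def in auto)
    then show "(v - orth_proj A v) \<bullet> b = 0" by (simp add: orthogonal_def)
  }
  have "(\<Sum>b\<in>Basis. orth_proj A b \<bullet> b) = (\<Sum>b\<in>Basis. \<Sum>e\<in>B. (b \<bullet> e) * (e \<bullet> b))"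
    by (simp add: F inner_sum_left)
  also have "\<dots> = (\<Sum>e\<in>B. \<Sum>b\<in>Basis. (e \<bullet> b) * (e \<bullet> b))"
    by (subst sum.swap) (auto intro!: sum.cong simp: inner_commute[of _ "_::'a"])
  also have "\<dots> = (\<Sum>e\<in>B. e \<bullet> e)" by (simp add: euclidean_inner[symmetric])
  also have "\<dots> = (\<Sum>e\<in>B. 1)" using n1 by (simp add: norm_eq_1)
  also have "\<dots> = real (dim A)" using cd by simp
  finally show "(\<Sum>b\<in>Basis. orth_proj A b \<bullet> b) = real (dim A)" .
qed



lemma lin_inner_expand:
  fixes H :: "'a::euclidean_space \<Rightarrow> 'a"
  assumes "linear H"
  shows "w \<bullet> H z = (\<Sum>b\<in>Basis. (z \<bullet> b) * (w \<bullet> H b))"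
proof -
  have "H z = H (\<Sum>b\<in>Basis. (z \<bullet> b) *\<^sub>R b)" by (simp add: euclidean_representation)
  also have "\<dots> = (\<Sum>b\<in>Basis. (z \<bullet> b) *\<^sub>R H b)"
    using assms by (simp add: linear_sum linear_scale)
  finally show ?thesis by (simp add: inner_sum_right)
qed

lemma div_formula:
  fixes g :: "'a::euclidean_space \<Rightarrow> 'a"
  assumes gd: "(g has_derivative H) (at x)" and nz: "g x \<noteq> 0"
  shows "norm (g x) * divg (\<lambda>y. g y /\<^sub>R norm (g y)) x
     = (\<Sum>b\<in>Basis. H b \<bullet> b) - (g x /\<^sub>R norm (g x)) \<bullet> H (g x /\<^sub>R norm (g x))"
proof -
  define N where "N = norm (g x)"
  have Npos: "N > 0" using nz N_def by simp
  have lin: "linear H" using gd has_derivative_linear by blast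
  have nd: "((\<lambda>y. norm (g y)) has_derivative (\<lambda>h. H h \<bullet> sgn (g x))) (at x)"
    using has_derivative_compose[OF gd has_derivative_norm[OF nz]] by simp
  have idr: "((\<lambda>y. inverse (norm (g y))) has_derivative
      (\<lambda>h. - (inverse N * (H h \<bullet> sgn (g x)) * inverse N))) (at x)"
    using Deriv.has_derivative_inverse[OF _ nd] nz N_def by simp
  have Fd: "((\<lambda>y. inverse (norm (g y)) *\<^sub>R g y) has_derivative
      (\<lambda>h. inverse (norm (g x)) *\<^sub>R H h + (- (inverse N * (H h \<bullet> sgn (g x)) * inverse N)) *\<^sub>R g x)) (at x)"
    using has_derivative_scaleR[OF idr gd] by (simp add: N_def)
  have fd: "frechet_derivative (\<lambda>y. g y /\<^sub>R norm (g y)) (at x) =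
      (\<lambda>h. inverse N *\<^sub>R H h + (- (inverse N * (H h \<bullet> sgn (g x)) * inverse N)) *\<^sub>R g x)"
    using frechet_derivative_at[OF Fd] by (simp add: N_def)
  have "divg (\<lambda>y. g y /\<^sub>R norm (g y)) x =
      (\<Sum>b\<in>Basis. inverse N * (H b \<bullet> b) - inverse N * inverse N * inverse N * ((g x \<bullet> b) * (g x \<bullet> H b)))"
    unfolding divg_def fd
    by (intro sum.cong refl) (simp add: inner_add_left inner_diff_right inner_add_right sgn_div_norm N_def[symmetric] inner_commute field_simps)
  also have "\<dots> = inverse N * (\<Sum>b\<in>Basis. H b \<bullet> b) - inverse N * inverse N * inverse N * (g x \<bullet> H (g x))"
    by (simp add: sum_subtractf sum_distrib_left lin_inner_expand[OF lin, of "g x" "g x"])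
  finally have "N * divg (\<lambda>y. g y /\<^sub>R norm (g y)) x = (\<Sum>b\<in>Basis. H b \<bullet> b) - inverse N * inverse N * (g x \<bullet> H (g x))"
    using Npos by (simp add: field_simps)
  moreover have "(g x /\<^sub>R N) \<bullet> H (g x /\<^sub>R N) = inverse N * inverse N * (g x \<bullet> H (g x))"
    using lin by (simp add: linear_scale)
  ultimately show ?thesis by (simp only: N_def)
qed


theorem lemma2p2:
  fixes u :: "'a::euclidean_space \<Rightarrow> real"
    and K :: "'a set" and A :: "'a set"
    and n k :: nat and p :: 'a and q :: "nat \<Rightarrow> 'a"
  assumes dim: "DIM('a) = n + 1"
    and k_ge: "1 \<le> k" and k_le: "k \<le> n - 1"
    \<comment> \<open>the compact connected domain bounded by M, and the arrival time u on it\<close>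
    and K_compact: "compact K" and K_conn: "connected K"
    and u_cont: "continuous_on K u"
    and u_bdry: "\<forall>x\<in>frontier K. u x = 0"
    \<comment> \<open>u is twice differentiable (in the interior)\<close>
    and u_diff: "\<forall>x\<in>interior K. u differentiable (at x)"
    and u_diff2: "\<forall>x\<in>interior K. grad u differentiable (at x)"
    \<comment> \<open>level set flow equation at regular points\<close>
    and pde: "\<forall>x\<in>interior K. grad u x \<noteq> 0 \<longrightarrow>
               norm (grad u x) * divg (\<lambda>y. grad u y /\<^sub>R norm (grad u y)) x = -1"
    \<comment> \<open>p is a singular point in S_k minus S_(k-1): blowup R^k x S^(n-k) with axis A\<close>
    and p_int: "p \<in> interior K"
    and p_sing: "grad u p = 0"
    and A_sub: "subspace A" and A_dim: "dim A = k"
    and hess_p: "\<forall>v. hess u p v = - (1 / real (n - k)) *\<^sub>R (v - orth_proj A v)"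
    \<comment> \<open>u is C^2 at p: the Hessian is continuous at p\<close>
    and C2: "\<forall>v. continuous (at p) (\<lambda>x. hess u x v)"
    \<comment> \<open>regular points converging to p\<close>
    and q_in: "\<forall>j. q j \<in> interior K"
    and q_reg: "\<forall>j. grad u (q j) \<noteq> 0"
    and q_lim: "q \<longlonglongrightarrow> p"
  shows "(\<lambda>j. orth_proj A (grad u (q j) /\<^sub>R norm (grad u (q j)))) \<longlonglongrightarrow> 0"
proof -
  define c where "c = 1 / real (n - k)"
  have nk: "n - k \<ge> 1" using k_ge k_le by linarith
  have cpos: "c > 0" using nk c_def by simp
  define P where "P = orth_proj A"
  define H0 where "H0 = hess u p"
  define nn where "nn j = grad u (q j) /\<^sub>R norm (grad u (q j))" for j
  define Hj where "Hj j = hess u (q j)" for j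
  have H0v: "H0 v = - c *\<^sub>R (v - P v)" for v using hess_p by (simp add: H0_def c_def P_def)
  have nn1: "norm (nn j) = 1" for j using q_reg by (simp add: nn_def)
  have hd: "(grad u has_derivative hess u x) (at x)" if "x \<in> interior K" for x
    using u_diff2 that frechet_derivative_works[of "grad u" "at x"] unfolding hess_def by blast
  have linj: "linear (Hj j)" for j unfolding Hj_def by (rule has_derivative_linear[OF hd[OF q_in[rule_format]]])
  have lin0: "linear H0" unfolding H0_def by (rule has_derivative_linear[OF hd[OF p_int]])
  have eqj: "(\<Sum>b\<in>Basis. Hj j b \<bullet> b) - nn j \<bullet> Hj j (nn j) = -1" for j
    using div_formula[OF hd[OF q_in[rule_format]] q_reg[rule_format], of j] pde q_in q_reg
    by (simp add: nn_def Hj_def)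
  have trH0: "(\<Sum>b\<in>Basis. H0 b \<bullet> b) = - c * (real n + 1 - real k)"
  proof -
    have "(\<Sum>b\<in>Basis. H0 b \<bullet> b) = (\<Sum>b\<in>Basis. - c * (1 - P b \<bullet> b))"
      by (intro sum.cong refl) (simp add: H0v inner_diff_left)
    also have "\<dots> = - c * (real DIM('a) - (\<Sum>b\<in>Basis. P b \<bullet> b))"
      by (subst sum_distrib_left[symmetric]) (simp add: sum_subtractf)
    also have "\<dots> = - c * (real n + 1 - real k)"
      using orth_proj_props(3)[OF A_sub] A_dim dim by (simp add: P_def)
    finally show ?thesis .
  qed
  have Hconv: "(\<lambda>j. Hj j b) \<longlonglongrightarrow> H0 b" for b
    unfolding Hj_def H0_def using isCont_tendsto_compose[OF C2[rule_format] q_lim] by simp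
  have trconv: "(\<lambda>j. \<Sum>b\<in>Basis. Hj j b \<bullet> b) \<longlonglongrightarrow> (\<Sum>b\<in>Basis. H0 b \<bullet> b)"
    by (intro tendsto_sum tendsto_inner Hconv tendsto_const)
  have diffconv: "(\<lambda>j. nn j \<bullet> Hj j (nn j) - nn j \<bullet> H0 (nn j)) \<longlonglongrightarrow> 0"
  proof (rule Lim_null_comparison)
    show "(\<lambda>j. \<Sum>b\<in>Basis. norm (Hj j b - H0 b)) \<longlonglongrightarrow> 0"
      by (intro tendsto_null_sum tendsto_norm_zero LIM_zero Hconv)
    show "\<forall>\<^sub>F j in sequentially. norm (nn j \<bullet> Hj j (nn j) - nn j \<bullet> H0 (nn j)) \<le> (\<Sum>b\<in>Basis. norm (Hj j b - H0 b))"
    proof (intro always_eventually allI)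
      fix j
      have "nn j \<bullet> Hj j (nn j) - nn j \<bullet> H0 (nn j) = (\<Sum>b\<in>Basis. (nn j \<bullet> b) * (nn j \<bullet> (Hj j b - H0 b)))"
        by (simp add: lin_inner_expand[OF linj[of j], of "nn j" "nn j"] lin_inner_expand[OF lin0, of "nn j" "nn j"] sum_subtractf[symmetric]
            inner_diff_right algebra_simps)
      also have "norm \<dots> \<le> (\<Sum>b\<in>Basis. norm ((nn j \<bullet> b) * (nn j \<bullet> (Hj j b - H0 b))))"
        by (rule norm_sum)
      also have "\<dots> \<le> (\<Sum>b\<in>Basis. norm (Hj j b - H0 b))"
      proof (rule sum_mono)
        fix b :: 'a assume b: "b \<in> Basis"
        have h1: "\<bar>nn j \<bullet> b\<bar> \<le> 1" using Basis_le_norm[OF b, of "nn j"] nn1 by (simp add: inner_commute)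
        moreover have h2: "\<bar>nn j \<bullet> (Hj j b - H0 b)\<bar> \<le> norm (Hj j b - H0 b)"
          using Cauchy_Schwarz_ineq2[of "nn j" "Hj j b - H0 b"] nn1 by simp
        ultimately show "norm ((nn j \<bullet> b) * (nn j \<bullet> (Hj j b - H0 b))) \<le> norm (Hj j b - H0 b)"
        proof -
          have "norm ((nn j \<bullet> b) * (nn j \<bullet> (Hj j b - H0 b))) = \<bar>nn j \<bullet> b\<bar> * \<bar>nn j \<bullet> (Hj j b - H0 b)\<bar>"
            by (simp add: abs_mult)
          also have "\<dots> \<le> 1 * \<bar>nn j \<bullet> (Hj j b - H0 b)\<bar>"
            by (rule mult_right_mono) (use h1 in auto)
          also have "\<dots> \<le> norm (Hj j b - H0 b)" using h2 by simp
          finally show ?thesis .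
        qed
      qed
      finally show "norm (nn j \<bullet> Hj j (nn j) - nn j \<bullet> H0 (nn j)) \<le> (\<Sum>b\<in>Basis. norm (Hj j b - H0 b))" .
    qed
  qed
  have quad: "nn j \<bullet> H0 (nn j) = - c * (1 - (norm (P (nn j)))^2)" for j
  proof -
    have o: "(nn j - P (nn j)) \<bullet> P (nn j) = 0"
      unfolding P_def by (rule orth_proj_props(2)[OF A_sub orth_proj_props(1)[OF A_sub]])
    have "nn j \<bullet> P (nn j) = (norm (P (nn j)))^2"
      using o by (simp add: inner_diff_left power2_norm_eq_inner)
    moreover have "nn j \<bullet> nn j = 1" using nn1 by (simp add: norm_eq_1)
    ultimately show ?thesis by (simp add: H0v inner_diff_right)
  qed
  have sq: "(norm (P (nn j)))^2 = 1 + (((\<Sum>b\<in>Basis. Hj j b \<bullet> b) + 1) - (nn j \<bullet> Hj j (nn j) - nn j \<bullet> H0 (nn j))) / c" for j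
    using quad[of j] eqj[of j] cpos by (simp add: field_simps)
  have "(\<lambda>j. (norm (P (nn j)))^2) \<longlonglongrightarrow> 1 + (((\<Sum>b\<in>Basis. H0 b \<bullet> b) + 1) - 0) / c"
    unfolding sq using cpos by (intro tendsto_add tendsto_const tendsto_divide tendsto_diff trconv diffconv) auto
  moreover have "1 + (((\<Sum>b\<in>Basis. H0 b \<bullet> b) + 1) - 0) / c = 0"
    using trH0 cpos nk unfolding c_def by (simp add: field_simps of_nat_diff)
  ultimately have "(\<lambda>j. (norm (P (nn j)))^2) \<longlonglongrightarrow> 0" by simp
  then have "(\<lambda>j. sqrt ((norm (P (nn j)))^2)) \<longlonglongrightarrow> sqrt 0" by (rule tendsto_real_sqrt)
  then have "(\<lambda>j. norm (P (nn j))) \<longlonglongrightarrow> 0" by simp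
  then show ?thesis by (simp add: tendsto_norm_zero_iff P_def nn_def)
qed

end
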